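(* Let $C_p,C_m>0$ and $T_p,T_m\in(0,1)$ with $T_p\ne T_m$, and let $P(k)=C_pT_p^k-C_mT_m^k$ for real $k$. Then $P$ has exactly one point of abscissa intersection $k^{(0)}$, exactly one extremum $k^{(1)}$ and exactly one inflection point $k^{(2)}$, and $k^{(0)}<k^{(1)}<k^{(2)}$. If $T_p>T_m$ (high pair function), the extremum is a maximum, $P$ is monotonically increasing to the left of its maximum and monotonically decreasing to the right of it, $P$ is concave to the left of its inflection point and convex to the right of it, $P(k)>0$ for $k>k^{(0)}$ and $P(k)<0$ for $k<k^{(0)}$, $P(k)\to 0$ from above as $k\to\infty$, and $P(k)\to-\infty$ as $k\to-\infty$. If $T_p<T_m$ (low pair function), the extremum is a minimum, $P$ is monotonically decreasing to the left of its minimum and monotonically increasing to the right of it, $P$ is convex to the left of its inflection point and concave to the right of it, $P(k)<0$ for $k>k^{(0)}$, $P(k)\to 0$ from below as $k\to\infty$, and $P(k)\to+\infty$ as $k\to-\infty$. Moreover, every derivative $P^{(n)}$, $n\ge 1$, has exactly one zero.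
   Context: A pair function is $P(k)=C_pT_p^k-C_mT_m^k$ with $C_p,C_m>0$ and $T_p,T_m\in(0,1)$. It is a high pair function (HPF) if $T_p>T_m$ and a low pair function (LPF) if $T_p<T_m$. *)

theory Defs
  imports "HOL-Analysis.Analysis"
begin

definition pair_fun :: "real \<Rightarrow> real \<Rightarrow> real \<Rightarrow> real \<Rightarrow> real \<Rightarrow> real" where
  "pair_fun Cp Tp Cm Tm k = Cp * Tp powr k - Cm * Tm powr k"

definition local_max_at :: "(real \<Rightarrow> real) \<Rightarrow> real \<Rightarrow> bool" where
  "local_max_at f x \<longleftrightarrow> (\<exists>e>0. \<forall>y. \<bar>y - x\<bar> < e \<longrightarrow> f y \<le> f x)"

definition local_min_at :: "(real \<Rightarrow> real) \<Rightarrow> real \<Rightarrow> bool" where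
  "local_min_at f x \<longleftrightarrow> (\<exists>e>0. \<forall>y. \<bar>y - x\<bar> < e \<longrightarrow> f x \<le> f y)"

definition local_extremum_at :: "(real \<Rightarrow> real) \<Rightarrow> real \<Rightarrow> bool" where
  "local_extremum_at f x \<longleftrightarrow> local_max_at f x \<or> local_min_at f x"

definition inflection_at :: "(real \<Rightarrow> real) \<Rightarrow> real \<Rightarrow> bool" where
  "inflection_at f x \<longleftrightarrow> (\<exists>e>0.
     (convex_on {x - e..x} f \<and> concave_on {x..x + e} f) \<or>
     (concave_on {x - e..x} f \<and> convex_on {x..x + e} f))"

end

theory Submission
  imports Defs
begin


definition Dn :: "real \<Rightarrow> real \<Rightarrow> real \<Rightarrow> real \<Rightarrow> nat \<Rightarrow> real \<Rightarrow> real" where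
  "Dn Cp a Cm b n k = Cp * a^n * exp (a*k) - Cm * b^n * exp (b*k)"

definition kn :: "real \<Rightarrow> real \<Rightarrow> real \<Rightarrow> real \<Rightarrow> nat \<Rightarrow> real" where
  "kn Cp a Cm b n = - (ln Cp - ln Cm + real n * (ln (-a) - ln (-b))) / (a - b)"

lemma Dn_deriv: "(Dn Cp a Cm b n has_real_derivative Dn Cp a Cm b (Suc n) k) (at k)"
  unfolding Dn_def by (auto intro!: derivative_eq_intros simp: algebra_simps)

lemma Dn_iter: "(deriv ^^ n) (Dn Cp a Cm b 0) = Dn Cp a Cm b n"
proof (induction n)
  case 0 then show ?case by simp
next
  case (Suc n)
  have "(deriv ^^ Suc n) (Dn Cp a Cm b 0) = deriv (Dn Cp a Cm b n)" using Suc by simp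
  also have "\<dots> = Dn Cp a Cm b (Suc n)"
    by (rule ext, rule DERIV_imp_deriv[OF Dn_deriv])
  finally show ?case .
qed

lemma Dn_G:
  assumes "Cp > 0" "Cm > 0" "a < 0" "b < 0"
  shows "Dn Cp a Cm b n k = (-1)^n * (exp (ln Cp + real n * ln (-a) + a*k) - exp (ln Cm + real n * ln (-b) + b*k))"
proof -
  have e1: "exp (ln Cp + real n * ln (-a) + a*k) = Cp * (-a)^n * exp (a*k)"
    using assms by (simp add: exp_add exp_of_nat_mult)
  have e2: "exp (ln Cm + real n * ln (-b) + b*k) = Cm * (-b)^n * exp (b*k)"
    using assms by (simp add: exp_add exp_of_nat_mult)
  have "a^n = (-1)^n * (-a)^n" "b^n = (-1)^n * (-b)^n"
    by (simp_all add: power_minus[symmetric])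
  then show ?thesis unfolding e1 e2 Dn_def by (simp add: algebra_simps)
qed

lemma key_eq:
  assumes "a \<noteq> b"
  shows "(ln Cp + real n * ln (-a) + a*k) - (ln Cm + real n * ln (-b) + b*k) = (a - b) * (k - kn Cp a Cm b n)"
  using assms unfolding kn_def by (simp add: field_simps)

lemma G_cases:
  fixes Cp Cm a b k :: real and n :: nat
  assumes "a \<noteq> b"
  defines "G \<equiv> exp (ln Cp + real n * ln (-a) + a*k) - exp (ln Cm + real n * ln (-b) + b*k)"
  shows "G > 0 \<longleftrightarrow> (a - b) * (k - kn Cp a Cm b n) > 0"
    and "G < 0 \<longleftrightarrow> (a - b) * (k - kn Cp a Cm b n) < 0"
    and "G = 0 \<longleftrightarrow> k = kn Cp a Cm b n"
proof -
  have e: "(a - b) * (k - kn Cp a Cm b n) = (ln Cp + real n * ln (-a) + a*k) - (ln Cm + real n * ln (-b) + b*k)"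
    using key_eq[OF assms(1)] by simp
  show "G > 0 \<longleftrightarrow> (a - b) * (k - kn Cp a Cm b n) > 0" unfolding e G_def by simp
  show "G < 0 \<longleftrightarrow> (a - b) * (k - kn Cp a Cm b n) < 0" unfolding e G_def by simp
  have "G = 0 \<longleftrightarrow> (a - b) * (k - kn Cp a Cm b n) = 0" unfolding e G_def by simp
  then show "G = 0 \<longleftrightarrow> k = kn Cp a Cm b n" using assms(1) by simp
qed

lemma Dn_zero_iff:
  assumes "Cp > 0" "Cm > 0" "a < 0" "b < 0" "a \<noteq> b"
  shows "Dn Cp a Cm b n k = 0 \<longleftrightarrow> k = kn Cp a Cm b n"
  using G_cases(3)[OF assms(5), of Cp n k Cm] Dn_G[OF assms(1-4), of n k] by simp

lemma D0_pos:
  assumes "Cp > 0" "Cm > 0" "a < 0" "b < 0" "a \<noteq> b"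
  shows "Dn Cp a Cm b 0 k > 0 \<longleftrightarrow> (a - b) * (k - kn Cp a Cm b 0) > 0"
    and "Dn Cp a Cm b 0 k < 0 \<longleftrightarrow> (a - b) * (k - kn Cp a Cm b 0) < 0"
  using G_cases(1,2)[OF assms(5), of Cp 0 k Cm] Dn_G[OF assms(1-4), of 0 k] by simp_all

lemma D1_pos:
  assumes "Cp > 0" "Cm > 0" "a < 0" "b < 0" "a \<noteq> b"
  shows "Dn Cp a Cm b 1 k > 0 \<longleftrightarrow> (a - b) * (k - kn Cp a Cm b 1) < 0"
    and "Dn Cp a Cm b 1 k < 0 \<longleftrightarrow> (a - b) * (k - kn Cp a Cm b 1) > 0"
  using G_cases(1,2)[OF assms(5), of Cp 1 k Cm] Dn_G[OF assms(1-4), of 1 k] by auto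

lemma D2_pos:
  assumes "Cp > 0" "Cm > 0" "a < 0" "b < 0" "a \<noteq> b"
  shows "Dn Cp a Cm b 2 k > 0 \<longleftrightarrow> (a - b) * (k - kn Cp a Cm b 2) > 0"
    and "Dn Cp a Cm b 2 k < 0 \<longleftrightarrow> (a - b) * (k - kn Cp a Cm b 2) < 0"
  using G_cases(1,2)[OF assms(5), of Cp 2 k Cm] Dn_G[OF assms(1-4), of 2 k] by simp_all

lemma kn_mono:
  assumes "a < 0" "b < 0" "a \<noteq> b"
  shows "kn Cp a Cm b n < kn Cp a Cm b (Suc n)"
proof -
  have d: "kn Cp a Cm b (Suc n) - kn Cp a Cm b n = (ln (-b) - ln (-a)) / (a - b)"
  proof -
    have "kn Cp a Cm b (Suc n) - kn Cp a Cm b n = (- (ln Cp - ln Cm + real (Suc n) * (ln (-a) - ln (-b))) - (- (ln Cp - ln Cm + real n * (ln (-a) - ln (-b))))) / (a - b)"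
      unfolding kn_def by (simp add: diff_divide_distrib)
    also have "\<dots> = (ln (-b) - ln (-a)) / (a - b)" by (simp add: algebra_simps)
    finally show ?thesis .
  qed
  have "(ln (-b) - ln (-a)) / (a - b) > 0"
  proof (cases "a < b")
    case True
    then have "ln (-a) > ln (-b)" using assms by simp
    then show ?thesis using True by (intro divide_neg_neg) auto
  next
    case False
    then have "a > b" using assms by simp
    then have "ln (-a) < ln (-b)" using assms by simp
    then show ?thesis using \<open>a > b\<close> by (intro divide_pos_pos) auto
  qed
  then show ?thesis using d by linarith
qed



lemma smono_gen:
  assumes der: "\<And>x. (f has_real_derivative f' x) (at x)"
    and pos: "\<And>x y z. x \<in> S \<Longrightarrow> y \<in> S \<Longrightarrow> x < z \<Longrightarrow> z < y \<Longrightarrow> f' z > 0"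
  shows "strict_mono_on S f"
  unfolding monotone_on_def
proof (intro ballI impI)
  fix x y assume xy: "x \<in> S" "y \<in> S" "x < y"
  obtain z where z: "x < z" "z < y" "f y - f x = (y - x) * f' z"
    using MVT2[OF xy(3), of f f'] der by blast
  have "f' z > 0" using pos[OF xy(1,2) z(1,2)] .
  then have "(y - x) * f' z > 0" using xy by simp
  then show "f x < f y" using z by linarith
qed

lemma santi_gen:
  assumes der: "\<And>x. (f has_real_derivative f' x) (at x)"
    and neg: "\<And>x y z. x \<in> S \<Longrightarrow> y \<in> S \<Longrightarrow> x < z \<Longrightarrow> z < y \<Longrightarrow> f' z < 0"
  shows "strict_antimono_on S f"
  unfolding monotone_on_def
proof (intro ballI impI)
  fix x y assume xy: "x \<in> S" "y \<in> S" "x < y"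
  obtain z where z: "x < z" "z < y" "f y - f x = (y - x) * f' z"
    using MVT2[OF xy(3), of f f'] der by blast
  have "f' z < 0" using neg[OF xy(1,2) z(1,2)] .
  then have "(y - x) * f' z < 0" using xy by (simp add: mult_pos_neg)
  then show "f x > f y" using z by linarith
qed

lemma fprime_strict_inc:
  assumes der2: "\<And>x. (f' has_real_derivative f'' x) (at x)"
    and pos: "\<And>x. x \<in> {u..v} \<Longrightarrow> f'' x > 0"
    and "u \<le> x" "x < y" "y \<le> v"
  shows "f' x < f' y"
proof -
  obtain z where z: "x < z" "z < y" "f' y - f' x = (y - x) * f'' z"
    using MVT2[OF assms(4), of f' f''] der2 by blast
  have "f'' z > 0" using pos z assms by auto
  then have "(y - x) * f'' z > 0" using assms by simp
  then show ?thesis using z by linarith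
qed

lemma not_concave:
  assumes der: "\<And>x. (f has_real_derivative f' x) (at x)"
    and der2: "\<And>x. (f' has_real_derivative f'' x) (at x)"
    and pos: "\<And>x. x \<in> {u..v} \<Longrightarrow> f'' x > 0"
    and uv: "u < v"
  shows "\<not> concave_on {u..v} f"
proof
  assume cc: "concave_on {u..v} f"
  define m where "m = (u + v) / 2"
  have m: "u < m" "m < v" using uv by (auto simp: m_def)
  have "f ((1 - 1/2) *\<^sub>R u + (1/2) *\<^sub>R v) \<ge> (1 - 1/2) * f u + (1/2) * f v"
    using concave_onD[OF cc, of "1/2" u v] uv by auto
  moreover have "(1 - 1/2) *\<^sub>R u + (1/2) *\<^sub>R v = m" by (simp add: m_def field_simps)
  ultimately have ineq: "f m \<ge> (f u + f v) / 2" by simp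
  obtain z1 where z1: "u < z1" "z1 < m" "f m - f u = (m - u) * f' z1"
    using MVT2[OF m(1), of f f'] der by blast
  obtain z2 where z2: "m < z2" "z2 < v" "f v - f m = (v - m) * f' z2"
    using MVT2[OF m(2), of f f'] der by blast
  have "f' z1 < f' z2"
    using fprime_strict_inc[OF der2 pos, of z1 z2] z1 z2 by auto
  moreover have "m - u = v - m" "m - u > 0" using m by (auto simp: m_def field_simps)
  ultimately have "(m - u) * f' z1 < (v - m) * f' z2" by (metis mult_strict_left_mono)
  then have "f m - f u < f v - f m" by (simp only: z1(3) z2(3))
  then show False using ineq by (simp add: field_simps)
qed

lemma not_convex:
  assumes der: "\<And>x. (f has_real_derivative f' x) (at x)"
    and der2: "\<And>x. (f' has_real_derivative f'' x) (at x)"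
    and neg: "\<And>x. x \<in> {u..v} \<Longrightarrow> f'' x < 0"
    and uv: "u < v"
  shows "\<not> convex_on {u..v} f"
proof -
  have "\<not> concave_on {u..v} (\<lambda>x. - f x)"
    by (rule not_concave[where f' = "\<lambda>x. - f' x" and f'' = "\<lambda>x. - f'' x"])
       (auto intro!: derivative_eq_intros der der2 neg uv)
  then show ?thesis by (simp add: concave_on_def)
qed

lemma concave_on_subset': "concave_on T f \<Longrightarrow> S \<subseteq> T \<Longrightarrow> convex S \<Longrightarrow> concave_on S f"
  unfolding concave_on_def by (rule convex_on_subset)

lemma no_inflection:
  assumes der: "\<And>x. (f has_real_derivative f' x) (at x)"
    and der2: "\<And>x. (f' has_real_derivative f'' x) (at x)"
    and neg: "\<And>x. x < c \<Longrightarrow> f'' x < 0"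
    and pos: "\<And>x. x > c \<Longrightarrow> f'' x > 0"
    and xc: "x \<noteq> c"
  shows "\<not> inflection_at f x"
  unfolding inflection_at_def
proof (intro notI, elim exE conjE disjE)
  fix e :: real assume e: "e > 0"
  { assume "convex_on {x - e..x} f" "concave_on {x..x + e} f"
    show False
    proof (cases "x < c")
      case True
      have "\<not> convex_on {x - e..x} f"
        by (rule not_convex[OF der der2]) (use True e neg in auto)
      then show False using \<open>convex_on {x - e..x} f\<close> by blast
    next
      case False
      then have "x > c" using xc by simp
      have "\<not> concave_on {x..x + e} f"
        by (rule not_concave[OF der der2]) (use \<open>x > c\<close> e pos in auto)
      then show False using \<open>concave_on {x..x + e} f\<close> by blast
    qed }
  { assume A: "concave_on {x - e..x} f" "convex_on {x..x + e} f"
    show False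
    proof (cases "x < c")
      case True
      define v where "v = min (x + e) ((x + c) / 2)"
      have v: "x < v" "v < c" "v \<le> x + e" using True e by (auto simp: v_def min_def)
      have "convex_on {x..v} f" by (rule convex_on_subset[OF A(2)]) (use v in auto)
      moreover have "\<not> convex_on {x..v} f"
        by (rule not_convex[OF der der2]) (use v neg in auto)
      ultimately show False by blast
    next
      case False
      then have xc': "x > c" using xc by simp
      define u where "u = max (x - e) ((x + c) / 2)"
      have u: "u < x" "c < u" "x - e \<le> u" using xc' e by (auto simp: u_def max_def)
      have "concave_on {u..x} f" by (rule concave_on_subset'[OF A(1)]) (use u in auto)
      moreover have "\<not> concave_on {u..x} f"
        by (rule not_concave[OF der der2]) (use u pos in auto)
      ultimately show False by blast
    qed }
qed

lemma inflection_uminus: "inflection_at (\<lambda>x. - f x) x \<longleftrightarrow> inflection_at f x"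
  unfolding inflection_at_def concave_on_def by auto

lemma extremum_deriv:
  assumes der: "(f has_real_derivative l) (at x)" and "local_extremum_at f x"
  shows "l = 0"
  using assms(2) unfolding local_extremum_at_def local_max_at_def local_min_at_def
proof (elim disjE exE conjE)
  fix e :: real assume "e > 0" "\<forall>y. \<bar>y - x\<bar> < e \<longrightarrow> f y \<le> f x"
  then show "l = 0" by (intro DERIV_local_max[OF der, of e]) (auto simp: abs_minus_commute)
next
  fix e :: real assume "e > 0" "\<forall>y. \<bar>y - x\<bar> < e \<longrightarrow> f x \<le> f y"
  then show "l = 0" by (intro DERIV_local_min[OF der, of e]) (auto simp: abs_minus_commute)
qed

lemma local_max_from:
  assumes "strict_mono_on {..c} f" "strict_antimono_on {c..} f"
  shows "local_max_at f c"
  unfolding local_max_at_def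
proof (rule exI[of _ 1], intro conjI allI impI)
  fix y :: real
  show "f y \<le> f c"
  proof (cases "y < c")
    case True then show ?thesis using assms(1) unfolding monotone_on_def by fastforce
  next
    case False
    then have "c = y \<or> c < y" by auto
    then show ?thesis using assms(2) unfolding monotone_on_def by fastforce
  qed
qed simp

lemma local_min_from:
  assumes "strict_antimono_on {..c} f" "strict_mono_on {c..} f"
  shows "local_min_at f c"
  unfolding local_min_at_def
proof (rule exI[of _ 1], intro conjI allI impI)
  fix y :: real
  show "f c \<le> f y"
  proof (cases "y < c")
    case True then show ?thesis using assms(1) unfolding monotone_on_def by fastforce
  next
    case False
    then have "c = y \<or> c < y" by auto
    then show ?thesis using assms(2) unfolding monotone_on_def by fastforce
  qed
qed simp


lemma lin_top: "(c::real) > 0 \<Longrightarrow> filterlim (\<lambda>k. c*k) at_top at_top"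
  by (rule filterlim_tendsto_pos_mult_at_top[OF tendsto_const]) (auto simp: filterlim_ident)
lemma lin_bot: "(c::real) > 0 \<Longrightarrow> filterlim (\<lambda>k. c*k) at_bot at_bot"
proof -
  assume c: "c > 0"
  have "filterlim (\<lambda>k. c*(-k)) at_top at_bot"
    by (rule filterlim_compose[OF lin_top[OF c] filterlim_uminus_at_top_at_bot])
  then show ?thesis using filterlim_uminus_at_bot by (simp add: filterlim_uminus_at_bot)
qed
lemma L1: "(c::real) < 0 \<Longrightarrow> ((\<lambda>k. exp(c*k)) \<longlongrightarrow> 0) at_top"
proof -
  assume c: "c < 0"
  have "filterlim (\<lambda>k. (-c)*k) at_top at_top" using c by (intro lin_top) simp
  then have "filterlim (\<lambda>k. c*k) at_bot at_top" by (simp add: filterlim_uminus_at_bot)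
  then show ?thesis by (rule filterlim_compose[OF exp_at_bot])
qed
lemma L2: "(c::real) > 0 \<Longrightarrow> ((\<lambda>k. exp(c*k)) \<longlongrightarrow> 0) at_bot"
  by (rule filterlim_compose[OF exp_at_bot lin_bot])
lemma L3: "(c::real) < 0 \<Longrightarrow> filterlim (\<lambda>k. exp(c*k)) at_top at_bot"
proof -
  assume c: "c < 0"
  have "filterlim (\<lambda>k. (-c)*k) at_bot at_bot" using c by (intro lin_bot) simp
  then have "filterlim (\<lambda>k. c*k) at_top at_bot" by (simp add: filterlim_uminus_at_bot)
  then show ?thesis by (rule filterlim_compose[OF exp_at_top])
qed



theorem lemma1:
  fixes Cp Cm Tp Tm :: real
  assumes "Cp > 0" "Cm > 0" "0 < Tp" "Tp < 1" "0 < Tm" "Tm < 1" "Tp \<noteq> Tm"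
  defines "P \<equiv> pair_fun Cp Tp Cm Tm"
  shows "\<exists>k0 k1 k2.
     {k. P k = 0} = {k0} \<and>
     {k. local_extremum_at P k} = {k1} \<and>
     {k. inflection_at P k} = {k2} \<and>
     k0 < k1 \<and> k1 < k2 \<and>
     (Tp > Tm \<longrightarrow>
        local_max_at P k1 \<and>
        strict_mono_on {..k1} P \<and> strict_antimono_on {k1..} P \<and>
        concave_on {..k2} P \<and> convex_on {k2..} P \<and>
        (\<forall>k>k0. P k > 0) \<and> (\<forall>k<k0. P k < 0) \<and>
        (P \<longlongrightarrow> 0) at_top \<and> (\<forall>\<^sub>F k in at_top. P k > 0) \<and>
        filterlim P at_bot at_bot) \<and>
     (Tp < Tm \<longrightarrow>
        local_min_at P k1 \<and>
        strict_antimono_on {..k1} P \<and> strict_mono_on {k1..} P \<and>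
        convex_on {..k2} P \<and> concave_on {k2..} P \<and>
        (\<forall>k>k0. P k < 0) \<and>
        (P \<longlongrightarrow> 0) at_top \<and> (\<forall>\<^sub>F k in at_top. P k < 0) \<and>
        filterlim P at_top at_bot) \<and>
     (\<forall>n\<ge>1. \<exists>!k. (deriv ^^ n) P k = 0)"
proof -
  define a where "a = ln Tp"
  define b where "b = ln Tm"
  have a0: "a < 0" using assms(3,4) by (simp add: a_def)
  have b0: "b < 0" using assms(5,6) by (simp add: b_def)
  have ab: "a \<noteq> b" using assms(3,5,7) by (simp add: a_def b_def)
  have hpf_iff: "Tp > Tm \<longleftrightarrow> a > b" using assms(3,5) by (simp add: a_def b_def)
  have lpf_iff: "Tp < Tm \<longleftrightarrow> a < b" using assms(3,5) by (simp add: a_def b_def)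
  define D where "D = Dn Cp a Cm b"
  define K where "K = kn Cp a Cm b"
  note A = assms(1,2) a0 b0 ab
  have hP: "P = D 0"
    by (rule ext) (use assms(3,5) in \<open>simp add: P_def pair_fun_def D_def Dn_def powr_def a_def b_def mult.commute\<close>)
  have Pexp: "P k = Cp * exp (a*k) - Cm * exp (b*k)" for k
    by (simp add: hP D_def Dn_def)
  have der1: "(P has_real_derivative D 1 x) (at x)" for x
    unfolding hP D_def using Dn_deriv[of Cp a Cm b 0 x] by simp
  have der2: "(D 1 has_real_derivative D 2 x) (at x)" for x
    unfolding D_def using Dn_deriv[of Cp a Cm b 1 x] by (simp add: numeral_2_eq_2)
  have zero_iff: "D n k = 0 \<longleftrightarrow> k = K n" for n k
    unfolding D_def K_def by (rule Dn_zero_iff[OF A])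
  have K01: "K 0 < K 1" and K12: "K 1 < K 2"
    unfolding K_def using kn_mono[OF a0 b0 ab, of Cp Cm 0] kn_mono[OF a0 b0 ab, of Cp Cm 1]
    by (simp_all add: numeral_2_eq_2)
  have P0: "P k > 0 \<longleftrightarrow> (a - b) * (k - K 0) > 0" "P k < 0 \<longleftrightarrow> (a - b) * (k - K 0) < 0" for k
    unfolding hP D_def K_def using D0_pos[OF A] by auto
  have P1: "D 1 k > 0 \<longleftrightarrow> (a - b) * (k - K 1) < 0" "D 1 k < 0 \<longleftrightarrow> (a - b) * (k - K 1) > 0" for k
    unfolding D_def K_def using D1_pos[OF A] by auto
  have P2: "D 2 k > 0 \<longleftrightarrow> (a - b) * (k - K 2) > 0" "D 2 k < 0 \<longleftrightarrow> (a - b) * (k - K 2) < 0" for k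
    unfolding D_def K_def using D2_pos[OF A] by auto
  have D2z: "D 2 (K 2) = 0" using zero_iff by simp
  have zeros: "{k. P k = 0} = {K 0}" using zero_iff hP by auto
  have lim_top: "(P \<longlongrightarrow> 0) at_top"
  proof -
    have "((\<lambda>k. Cp * exp (a*k) - Cm * exp (b*k)) \<longlongrightarrow> Cp * 0 - Cm * 0) at_top"
      by (intro tendsto_intros L1 a0 b0)
    then show ?thesis by (simp add: Pexp[abs_def])
  qed
  have ext_char: "local_extremum_at P k \<Longrightarrow> k = K 1" for k
    using extremum_deriv[OF der1] zero_iff by blast
  have derivs: "\<forall>n\<ge>1. \<exists>!k. (deriv ^^ n) P k = 0"
    unfolding hP D_def using Dn_iter Dn_zero_iff[OF A] by auto
  show ?thesis
  proof (cases "a > b")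
    case hpf: True
    have s1: "D 1 k > 0 \<longleftrightarrow> k < K 1" "D 1 k < 0 \<longleftrightarrow> k > K 1" for k
      using P1[of k] hpf by (auto simp: mult_less_0_iff zero_less_mult_iff)
    have s2: "D 2 k > 0 \<longleftrightarrow> k > K 2" "D 2 k < 0 \<longleftrightarrow> k < K 2" for k
      using P2[of k] hpf by (auto simp: mult_less_0_iff zero_less_mult_iff)
    have s0: "P k > 0 \<longleftrightarrow> k > K 0" "P k < 0 \<longleftrightarrow> k < K 0" for k
      using P0[of k] hpf by (auto simp: mult_less_0_iff zero_less_mult_iff)
    have m1: "strict_mono_on {..K 1} P"
      by (rule smono_gen[OF der1], subst s1, auto)
    have m2: "strict_antimono_on {K 1..} P"
      by (rule santi_gen[OF der1], subst s1, auto)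
    have lm: "local_max_at P (K 1)" by (rule local_max_from[OF m1 m2])
    have c1: "concave_on {..K 2} P"
      by (rule f''_le0_imp_concave[OF _ der1 der2]) (auto simp: le_less s2 D2z)
    have c2: "convex_on {K 2..} P"
      by (rule f''_ge0_imp_convex[OF _ der1 der2]) (auto simp: le_less s2 D2z)
    have infl: "{k. inflection_at P k} = {K 2}"
    proof (intro set_eqI iffI)
      fix k assume "k \<in> {k. inflection_at P k}"
      then show "k \<in> {K 2}" using no_inflection[OF der1 der2, of "K 2" k] s2 by auto
    next
      fix k assume "k \<in> {K 2}"
      then have k: "k = K 2" by simp
      have "concave_on {k - 1..k} P" by (rule concave_on_subset'[OF c1]) (auto simp: k)
      moreover have "convex_on {k..k + 1} P" by (rule convex_on_subset[OF c2]) (auto simp: k)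
      ultimately show "k \<in> {k. inflection_at P k}" unfolding inflection_at_def
        by (intro CollectI exI[of _ 1]) auto
    qed
    have extr: "{k. local_extremum_at P k} = {K 1}"
      using ext_char lm by (auto simp: local_extremum_at_def)
    have ev: "\<forall>\<^sub>F k in at_top. P k > 0"
      using eventually_gt_at_top[of "K 0"] by eventually_elim (simp add: s0)
    have bot: "filterlim P at_bot at_bot"
    proof -
      have eq: "P k = (Cp * exp ((a - b) * k) - Cm) * exp (b * k)" for k
        by (simp add: Pexp algebra_simps exp_add[symmetric])
      have t: "((\<lambda>k. Cp * exp ((a - b) * k) - Cm) \<longlongrightarrow> Cp * 0 - Cm) at_bot"
        using hpf by (intro tendsto_intros L2) simp
      have "filterlim (\<lambda>k. (Cp * exp ((a - b) * k) - Cm) * exp (b * k)) at_bot at_bot"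
        by (rule filterlim_tendsto_neg_mult_at_bot[OF t]) (use assms(2) L3[OF b0] in auto)
      then show ?thesis by (simp add: eq[abs_def])
    qed
    show ?thesis
      apply (rule exI[of _ "K 0"], rule exI[of _ "K 1"], rule exI[of _ "K 2"])
      using zeros extr infl K01 K12 lm m1 m2 c1 c2 s0 lim_top ev bot derivs hpf_iff lpf_iff hpf
      by auto
  next
    case False
    then have lpf: "a < b" using ab by simp
    have s1: "D 1 k > 0 \<longleftrightarrow> k > K 1" "D 1 k < 0 \<longleftrightarrow> k < K 1" for k
      using P1[of k] lpf by (auto simp: mult_less_0_iff zero_less_mult_iff)
    have s2: "D 2 k > 0 \<longleftrightarrow> k < K 2" "D 2 k < 0 \<longleftrightarrow> k > K 2" for k
      using P2[of k] lpf by (auto simp: mult_less_0_iff zero_less_mult_iff)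
    have s0: "P k > 0 \<longleftrightarrow> k < K 0" "P k < 0 \<longleftrightarrow> k > K 0" for k
      using P0[of k] lpf by (auto simp: mult_less_0_iff zero_less_mult_iff)
    have m1: "strict_antimono_on {..K 1} P"
      by (rule santi_gen[OF der1], subst s1, auto)
    have m2: "strict_mono_on {K 1..} P"
      by (rule smono_gen[OF der1], subst s1, auto)
    have lm: "local_min_at P (K 1)" by (rule local_min_from[OF m1 m2])
    have c1: "convex_on {..K 2} P"
      by (rule f''_ge0_imp_convex[OF _ der1 der2]) (auto simp: le_less s2 D2z)
    have c2: "concave_on {K 2..} P"
      by (rule f''_le0_imp_concave[OF _ der1 der2]) (auto simp: le_less s2 D2z)
    have nder1: "((\<lambda>x. - P x) has_real_derivative - D 1 x) (at x)" for x
      by (rule DERIV_minus[OF der1])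
    have nder2: "((\<lambda>x. - D 1 x) has_real_derivative - D 2 x) (at x)" for x
      by (rule DERIV_minus[OF der2])
    have infl: "{k. inflection_at P k} = {K 2}"
    proof (intro set_eqI iffI)
      fix k assume "k \<in> {k. inflection_at P k}"
      then have "inflection_at (\<lambda>x. - P x) k" by (simp add: inflection_uminus)
      then show "k \<in> {K 2}" using no_inflection[OF nder1 nder2, of "K 2" k] s2 by auto
    next
      fix k assume "k \<in> {K 2}"
      then have k: "k = K 2" by simp
      have "convex_on {k - 1..k} P" by (rule convex_on_subset[OF c1]) (auto simp: k)
      moreover have "concave_on {k..k + 1} P" by (rule concave_on_subset'[OF c2]) (auto simp: k)
      ultimately show "k \<in> {k. inflection_at P k}" unfolding inflection_at_def
        by (intro CollectI exI[of _ 1]) auto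
    qed
    have extr: "{k. local_extremum_at P k} = {K 1}"
      using ext_char lm by (auto simp: local_extremum_at_def)
    have ev: "\<forall>\<^sub>F k in at_top. P k < 0"
      using eventually_gt_at_top[of "K 0"] by eventually_elim (simp add: s0)
    have bot: "filterlim P at_top at_bot"
    proof -
      have eq: "P k = (Cp - Cm * exp ((b - a) * k)) * exp (a * k)" for k
        by (simp add: Pexp algebra_simps exp_add[symmetric])
      have t: "((\<lambda>k. Cp - Cm * exp ((b - a) * k)) \<longlongrightarrow> Cp - Cm * 0) at_bot"
        using lpf by (intro tendsto_intros L2) simp
      have "filterlim (\<lambda>k. (Cp - Cm * exp ((b - a) * k)) * exp (a * k)) at_top at_bot"
        by (rule filterlim_tendsto_pos_mult_at_top[OF t]) (use assms(1) L3[OF a0] in auto)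
      then show ?thesis by (simp add: eq[abs_def])
    qed
    show ?thesis
      apply (rule exI[of _ "K 0"], rule exI[of _ "K 1"], rule exI[of _ "K 2"])
      using zeros extr infl K01 K12 lm m1 m2 c1 c2 s0 lim_top ev bot derivs hpf_iff lpf_iff lpf
      by auto
  qed
qed

end
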